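(* Let $G$ be a trivalent graph embedded in the $2$-sphere with a perfect matching $M$ such that $G(V,E\setminus M)$ is a single cycle $C$. For a face $F$ of the embedding, let $m(F)$ be the number of edges of $M$ on the boundary of $F$ and $\ell(F)$ the number of vertices on the boundary of $F$ whose matching edge does not lie on the boundary of $F$. Then $G$ has a face $F$ with $$(m(F),\ell(F))\in\{(1,0),(1,1),(1,2),(2,0),(2,1),(3,0)\}.$$ Explicitly, $G$ contains one of the following local configurations: a digon bounded by one matching edge and one non-matching edge; a triangle bounded by one matching edge and two non-matching edges; a quadrilateral bounded by one matching edge and a path of three non-matching edges; a quadrilateral bounded alternately by two matching and two non-matching edges; a pentagon bounded by two non-adjacent matching edges and three non-matching edges; or a hexagon bounded alternately by three matching and three non-matching edges.
   Context: Graphs are finite and may have multiple edges; trivalent means every vertex has degree $3$. $G(V,E\setminus M)$ denotes the graph with all vertices of $G$ and all edges of $G$ not in $M$. *)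

theory Defs
  imports "HOL-Combinatorics.Permutations"
begin

text \<open>Graphs embedded in the 2-sphere are represented by combinatorial maps
(rotation systems): a finite set of darts D, a fixed-point-free involution alpha
(the two darts of each edge) and a permutation sigma (cyclic order of darts around
each vertex). Vertices are sigma-orbits, edges are alpha-orbits, faces are orbits of
phi = sigma o alpha. Multiple edges and loops are allowed.\<close>

definition morbit :: "('d \<Rightarrow> 'd) \<Rightarrow> 'd \<Rightarrow> 'd set" where
  "morbit f x = {(f ^^ n) x | n. True}"

definition comb_map :: "'d set \<Rightarrow> ('d \<Rightarrow> 'd) \<Rightarrow> ('d \<Rightarrow> 'd) \<Rightarrow> bool" where
  "comb_map D \<alpha> \<sigma> \<longleftrightarrow> finite D \<and> \<alpha> permutes D \<and> \<sigma> permutes D \<and>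
     (\<forall>d\<in>D. \<alpha> d \<noteq> d \<and> \<alpha> (\<alpha> d) = d)"

definition map_vertices :: "'d set \<Rightarrow> ('d \<Rightarrow> 'd) \<Rightarrow> 'd set set" where
  "map_vertices D \<sigma> = {morbit \<sigma> d | d. d \<in> D}"

definition map_edge :: "('d \<Rightarrow> 'd) \<Rightarrow> 'd \<Rightarrow> 'd set" where
  "map_edge \<alpha> d = {d, \<alpha> d}"

definition map_edges :: "'d set \<Rightarrow> ('d \<Rightarrow> 'd) \<Rightarrow> 'd set set" where
  "map_edges D \<alpha> = {map_edge \<alpha> d | d. d \<in> D}"

definition map_faces :: "'d set \<Rightarrow> ('d \<Rightarrow> 'd) \<Rightarrow> ('d \<Rightarrow> 'd) \<Rightarrow> 'd set set" where
  "map_faces D \<alpha> \<sigma> = {morbit (\<sigma> \<circ> \<alpha>) d | d. d \<in> D}"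

definition map_connected :: "'d set \<Rightarrow> ('d \<Rightarrow> 'd) \<Rightarrow> ('d \<Rightarrow> 'd) \<Rightarrow> bool" where
  "map_connected D \<alpha> \<sigma> \<longleftrightarrow>
     (\<forall>d\<in>D. \<forall>e\<in>D. (d, e) \<in> ({(x, \<alpha> x) | x. x \<in> D} \<union> {(x, \<sigma> x) | x. x \<in> D})\<^sup>*)"

text \<open>A connected graph embedded in the 2-sphere: connected map of Euler characteristic 2.\<close>
definition spherical_map :: "'d set \<Rightarrow> ('d \<Rightarrow> 'd) \<Rightarrow> ('d \<Rightarrow> 'd) \<Rightarrow> bool" where
  "spherical_map D \<alpha> \<sigma> \<longleftrightarrow> comb_map D \<alpha> \<sigma> \<and> map_connected D \<alpha> \<sigma> \<and>
     int (card (map_vertices D \<sigma>)) - int (card (map_edges D \<alpha>))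
       + int (card (map_faces D \<alpha> \<sigma>)) = 2"

definition trivalent :: "'d set \<Rightarrow> ('d \<Rightarrow> 'd) \<Rightarrow> bool" where
  "trivalent D \<sigma> \<longleftrightarrow> (\<forall>d\<in>D. card (morbit \<sigma> d) = 3)"

text \<open>A perfect matching, given as the set of darts of its edges.\<close>
definition perfect_matching :: "'d set \<Rightarrow> ('d \<Rightarrow> 'd) \<Rightarrow> ('d \<Rightarrow> 'd) \<Rightarrow> 'd set \<Rightarrow> bool" where
  "perfect_matching D \<alpha> \<sigma> M \<longleftrightarrow> M \<subseteq> D \<and> (\<forall>d\<in>M. \<alpha> d \<in> M) \<and>
     (\<forall>d\<in>D. card (morbit \<sigma> d \<inter> M) = 1)"

text \<open>G(V, E - M) is a single cycle: every vertex has degree 2 in it and it is connected.\<close>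
definition complement_single_cycle :: "'d set \<Rightarrow> ('d \<Rightarrow> 'd) \<Rightarrow> ('d \<Rightarrow> 'd) \<Rightarrow> 'd set \<Rightarrow> bool" where
  "complement_single_cycle D \<alpha> \<sigma> M \<longleftrightarrow>
     (\<forall>d\<in>D. card (morbit \<sigma> d - M) = 2) \<and>
     (\<forall>d\<in>D. \<forall>e\<in>D. (d, e) \<in> ({(x, \<alpha> x) | x. x \<in> D - M} \<union> {(x, \<sigma> x) | x. x \<in> D})\<^sup>*)"

definition face_m :: "('d \<Rightarrow> 'd) \<Rightarrow> 'd set \<Rightarrow> 'd set \<Rightarrow> nat" where
  "face_m \<alpha> M F = card {map_edge \<alpha> d | d. d \<in> F \<inter> M}"

definition face_l :: "('d \<Rightarrow> 'd) \<Rightarrow> ('d \<Rightarrow> 'd) \<Rightarrow> 'd set \<Rightarrow> 'd set \<Rightarrow> nat" where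
  "face_l \<alpha> \<sigma> M F = card {morbit \<sigma> d | d. d \<in> F \<and>
       (\<forall>x \<in> morbit \<sigma> d \<inter> M. map_edge \<alpha> x \<inter> F = {})}"

end

theory Submission imports Defs "HOL-Combinatorics.Orbits" begin

lemma morbit_orbit: "permutation p \<Longrightarrow> morbit p x = orbit p x"
  by (simp add: morbit_def orbit_altdef_permutation)

lemma orbit_same: "permutation p \<Longrightarrow> y \<in> orbit p x \<Longrightarrow> orbit p y = orbit p x"
  by (meson cyclic_on_orbit' orbit_cyclic_eq3)

lemma orbit_back: "permutation p \<Longrightarrow> p y \<in> orbit p x \<Longrightarrow> y \<in> orbit p x"
  by (metis orbit_same permutation_orbit_step permutation_self_in_orbit)

lemma orbit_fwd: "permutation p \<Longrightarrow> y \<in> orbit p x \<Longrightarrow> p y \<in> orbit p x"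
  by (rule orbit.step)

lemma partition_sum:
  assumes "p permutes D" "finite D" "A \<subseteq> D"
  shows "(\<Sum>B \<in> orbit p ` D. card (B \<inter> A)) = card A"
proof -
  have perm: "permutation p" using assms permutation_permutes by blast
  have fin: "finite (orbit p ` D)" using assms(2) by simp
  have "card (\<Union>B\<in>orbit p ` D. B \<inter> A) = (\<Sum>B \<in> orbit p ` D. card (B \<inter> A))"
  proof (rule card_UN_disjoint[OF fin])
    show "\<forall>i\<in>orbit p ` D. finite (i \<inter> A)"
    proof
      fix i assume "i \<in> orbit p ` D"
      then obtain d where "d \<in> D" "i = orbit p d" by (rule imageE) simp
      then have "i \<subseteq> D" using permutes_orbit_subset[OF assms(1)] by simp
      then show "finite (i \<inter> A)" using assms(2) finite_subset by (meson finite_Int)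
    qed
    show "\<forall>i\<in>orbit p ` D. \<forall>j\<in>orbit p ` D. i \<noteq> j \<longrightarrow> i \<inter> A \<inter> (j \<inter> A) = {}"
    proof (intro ballI impI)
      fix i j assume "i \<in> orbit p ` D" "j \<in> orbit p ` D" "i \<noteq> j"
      then obtain a b where ab: "i = orbit p a" "j = orbit p b" by (meson imageE)
      show "i \<inter> A \<inter> (j \<inter> A) = {}"
      proof (rule ccontr)
        assume "i \<inter> A \<inter> (j \<inter> A) \<noteq> {}"
        then obtain z where "z \<in> orbit p a" "z \<in> orbit p b" using ab by blast
        then have "orbit p a = orbit p b" using orbit_same[OF perm] by metis
        with ab \<open>i \<noteq> j\<close> show False by simp
      qed
    qed
  qed
  moreover have "(\<Union>B\<in>orbit p ` D. B \<inter> A) = A"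
  proof
    show "(\<Union>B\<in>orbit p ` D. B \<inter> A) \<subseteq> A" by blast
    show "A \<subseteq> (\<Union>B\<in>orbit p ` D. B \<inter> A)"
    proof
      fix z assume "z \<in> A"
      then have "z \<in> D" "z \<in> orbit p z" using assms(3) permutation_self_in_orbit[OF perm] by auto
      then show "z \<in> (\<Union>B\<in>orbit p ` D. B \<inter> A)" using \<open>z \<in> A\<close> by blast
    qed
  qed
  ultimately show ?thesis by simp
qed

lemma one3:
  assumes "a \<noteq> b" "a \<noteq> c" "b \<noteq> c" "card ({a,b,c} \<inter> M) = 1"
  shows "(a \<in> M \<and> b \<notin> M \<and> c \<notin> M) \<or> (a \<notin> M \<and> b \<in> M \<and> c \<notin> M) \<or> (a \<notin> M \<and> b \<notin> M \<and> c \<in> M)"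
  using assms by (cases "a \<in> M"; cases "b \<in> M"; cases "c \<in> M") (simp_all add: Int_insert_left)

lemma vert3:
  assumes "s permutes D" "finite D" "card (orbit s d) = 3"
  shows "orbit s d = {d, s d, s (s d)} \<and> s (s (s d)) = d \<and> s d \<noteq> d \<and> s (s d) \<noteq> d \<and> s (s d) \<noteq> s d"
proof -
  have perm: "permutation s" using assms permutation_permutes by blast
  have inj: "inj s" using assms(1) permutes_inj by blast
  have fin: "finite (orbit s d)" using assms(3) card.infinite by fastforce
  have a: "s d \<noteq> d"
  proof
    assume "s d = d" then have "orbit s d = {d}" by (simp add: orbit_eq_singleton_iff)
    with assms(3) show False by simp
  qed
  have b: "s (s d) \<noteq> d"
  proof
    assume h: "s (s d) = d"
    have "orbit s d = {(s ^^ m) d | m. m < 2}"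
      by (rule orbit_altdef_bounded) (use h in \<open>auto simp: numeral_2_eq_2\<close>)
    also have "\<dots> = {d, s d}"
    proof (intro set_eqI iffI)
      fix x assume "x \<in> {(s ^^ m) d | m. m < 2}"
      then obtain m where "x = (s^^m) d" "m < 2" by blast
      then show "x \<in> {d, s d}" by (cases m) (auto simp: numeral_2_eq_2)
    next
      fix x assume "x \<in> {d, s d}"
      moreover have "d \<in> {(s ^^ m) d | m. m < 2}"
        using exI[of "\<lambda>m. d = (s^^m) d \<and> m < 2" 0] by simp
      moreover have "s d \<in> {(s ^^ m) d | m. m < 2}"
        using exI[of "\<lambda>m. s d = (s^^m) d \<and> m < 2" 1] by simp
      ultimately show "x \<in> {(s ^^ m) d | m. m < 2}" by blast
    qed
    finally have "card (orbit s d) \<le> 2" by (simp add: card_insert_if)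
    with assms(3) show False by simp
  qed
  have c: "s (s d) \<noteq> s d" using a inj by (metis injD)
  have in3: "{d, s d, s (s d)} \<subseteq> orbit s d"
    using permutation_self_in_orbit[OF perm] by (auto intro: orbit.intros)
  have "card {d, s d, s (s d)} = 3" using a b c by auto
  then have eq: "orbit s d = {d, s d, s (s d)}"
    using card_subset_eq[OF fin in3] assms(3) by simp
  have "s (s (s d)) \<in> orbit s d" using in3 by (auto intro: orbit.intros)
  moreover have "s (s (s d)) \<noteq> s d" using b inj by (metis injD)
  moreover have "s (s (s d)) \<noteq> s (s d)" using c inj by (metis injD)
  ultimately have "s (s (s d)) = d" using eq by auto
  with eq a b c show ?thesis by blast
qed

lemma arith6: "(m::nat) \<noteq> 0 \<Longrightarrow> (m, l) \<notin> {(1,0),(1,1),(1,2),(2,0),(2,1),(3,0)} \<Longrightarrow> 4 \<le> m + l"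
  by (simp; presburger)

lemma edge_orbit:
  assumes "\<alpha> (\<alpha> d) = d"
  shows "orbit \<alpha> d = {d, \<alpha> d}"
proof
  show "orbit \<alpha> d \<subseteq> {d, \<alpha> d}"
  proof
    fix y assume "y \<in> orbit \<alpha> d"
    then show "y \<in> {d, \<alpha> d}" by induct (use assms in auto)
  qed
  show "{d, \<alpha> d} \<subseteq> orbit \<alpha> d"
    using assms orbit.base[of \<alpha> d] orbit.step[of "\<alpha> d" \<alpha> d] by auto
qed

theorem lemma2p7:
  fixes D :: "'d set" and \<alpha> \<sigma> :: "'d \<Rightarrow> 'd" and M :: "'d set"
  assumes "spherical_map D \<alpha> \<sigma>"
    and "trivalent D \<sigma>"
    and "perfect_matching D \<alpha> \<sigma> M"
    and "complement_single_cycle D \<alpha> \<sigma> M"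
  shows "\<exists>F \<in> map_faces D \<alpha> \<sigma>.
           (face_m \<alpha> M F, face_l \<alpha> \<sigma> M F) \<in> {(1,0), (1,1), (1,2), (2,0), (2,1), (3,0)}"
proof (rule ccontr)
  assume nog: "\<not> ?thesis"
  have sm0: "comb_map D \<alpha> \<sigma> \<and> map_connected D \<alpha> \<sigma> \<and> int (card (map_vertices D \<sigma>)) - int (card (map_edges D \<alpha>)) + int (card (map_faces D \<alpha> \<sigma>)) = 2"
    using assms(1) unfolding spherical_map_def .
  have sm: "comb_map D \<alpha> \<sigma>" using sm0 by (rule conjunct1)
  have euler: "int (card (map_vertices D \<sigma>)) - int (card (map_edges D \<alpha>)) + int (card (map_faces D \<alpha> \<sigma>)) = 2"
    using sm0 by (rule conjunct2[OF conjunct2])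
  have cm: "finite D \<and> \<alpha> permutes D \<and> \<sigma> permutes D \<and> (\<forall>d\<in>D. \<alpha> d \<noteq> d \<and> \<alpha> (\<alpha> d) = d)"
    using sm unfolding comb_map_def .
  have fin: "finite D" using cm by (rule conjunct1)
  have pa: "\<alpha> permutes D" using cm by (rule conjunct1[OF conjunct2])
  have ps: "\<sigma> permutes D" using cm by (rule conjunct1[OF conjunct2[OF conjunct2]])
  have ainv0: "\<forall>d\<in>D. \<alpha> d \<noteq> d \<and> \<alpha> (\<alpha> d) = d" using cm by (rule conjunct2[OF conjunct2[OF conjunct2]])
  have ainv: "\<alpha> d \<noteq> d \<and> \<alpha> (\<alpha> d) = d" if "d \<in> D" for d using ainv0 that by blast
  have pm: "M \<subseteq> D \<and> (\<forall>d\<in>M. \<alpha> d \<in> M) \<and> (\<forall>d\<in>D. card (morbit \<sigma> d \<inter> M) = 1)"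
    using assms(3) unfolding perfect_matching_def .
  have MD: "M \<subseteq> D" using pm by (rule conjunct1)
  have Ma0: "\<forall>d\<in>M. \<alpha> d \<in> M" using pm by (rule conjunct1[OF conjunct2])
  have Mone0: "\<forall>d\<in>D. card (morbit \<sigma> d \<inter> M) = 1" using pm by (rule conjunct2[OF conjunct2])
  have Ma: "\<alpha> d \<in> M" if "d \<in> M" for d using Ma0 that by blast
  have Mone: "card (morbit \<sigma> d \<inter> M) = 1" if "d \<in> D" for d using Mone0 that by blast
  have conn0: "\<forall>d\<in>D. \<forall>e\<in>D. (d, e) \<in> ({(x, \<alpha> x) | x. x \<in> D - M} \<union> {(x, \<sigma> x) | x. x \<in> D})\<^sup>*"
    using assms(4) unfolding complement_single_cycle_def by (rule conjunct2)
  have conn: "(d, e) \<in> ({(x, \<alpha> x) | x. x \<in> D - M} \<union> {(x, \<sigma> x) | x. x \<in> D})\<^sup>*"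
    if "d \<in> D" "e \<in> D" for d e using conn0 that by blast
  define \<phi> where "\<phi> = \<sigma> \<circ> \<alpha>"
  have pp: "\<phi> permutes D" unfolding \<phi>_def using pa ps by (rule permutes_compose)
  have permS: "permutation \<sigma>" and permA: "permutation \<alpha>" and permP: "permutation \<phi>"
    using fin ps pa pp permutation_permutes by blast+
  have sD: "\<And>x. x \<in> D \<Longrightarrow> \<sigma> x \<in> D" using ps by (simp add: permutes_in_image)
  have aD: "\<And>x. x \<in> D \<Longrightarrow> \<alpha> x \<in> D" using pa by (simp add: permutes_in_image)
  have V: "orbit \<sigma> d = {d, \<sigma> d, \<sigma> (\<sigma> d)} \<and> \<sigma> (\<sigma> (\<sigma> d)) = d \<and> \<sigma> d \<noteq> d \<and> \<sigma> (\<sigma> d) \<noteq> d \<and> \<sigma> (\<sigma> d) \<noteq> \<sigma> d"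
    if d: "d \<in> D" for d
  proof -
    have "card (orbit \<sigma> d) = 3" using assms(2) d morbit_orbit[OF permS] by (simp add: trivalent_def)
    then show ?thesis using vert3[OF ps fin] by blast
  qed
  have one: "(d \<in> M \<and> \<sigma> d \<notin> M \<and> \<sigma> (\<sigma> d) \<notin> M) \<or> (d \<notin> M \<and> \<sigma> d \<in> M \<and> \<sigma> (\<sigma> d) \<notin> M) \<or> (d \<notin> M \<and> \<sigma> d \<notin> M \<and> \<sigma> (\<sigma> d) \<in> M)"
    if d: "d \<in> D" for d
  proof -
    have c: "card ({d, \<sigma> d, \<sigma> (\<sigma> d)} \<inter> M) = 1"
      using V[OF d] Mone[OF d] morbit_orbit[OF permS] by simp
    have v: "\<sigma> d \<noteq> d \<and> \<sigma> (\<sigma> d) \<noteq> d \<and> \<sigma> (\<sigma> d) \<noteq> \<sigma> d" using V[OF d] by (elim conjE) (intro conjI)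
    have n1: "d \<noteq> \<sigma> d" using v by metis
    have n2: "d \<noteq> \<sigma> (\<sigma> d)" using v by metis
    have n3: "\<sigma> d \<noteq> \<sigma> (\<sigma> d)" using v by metis
    show ?thesis by (rule one3[OF n1 n2 n3 c])
  qed
  have faces0: "map_faces D \<alpha> \<sigma> = {orbit \<phi> d | d. d \<in> D}"
    unfolding map_faces_def \<phi>_def[symmetric] morbit_orbit[OF permP] ..
  have faces: "map_faces D \<alpha> \<sigma> = orbit \<phi> ` D" unfolding faces0 by (rule Setcompr_eq_image)
  have ffinite: "finite (map_faces D \<alpha> \<sigma>)" unfolding faces using fin by simp
  have fobt: "\<exists>d. d \<in> D \<and> F = orbit \<phi> d" if "F \<in> map_faces D \<alpha> \<sigma>" for F
    using that unfolding faces by (rule imageE) (rule exI, rule conjI)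
  have fD: "F \<subseteq> D" if F: "F \<in> map_faces D \<alpha> \<sigma>" for F
  proof -
    obtain d where "d \<in> D" "F = orbit \<phi> d" using fobt[OF F] by (elim exE conjE)
    then show ?thesis using permutes_orbit_subset[OF pp] by simp
  qed
  have ffin: "finite F" if "F \<in> map_faces D \<alpha> \<sigma>" for F
    using fD[OF that] fin by (rule finite_subset)
  have fwd: "\<phi> y \<in> F" if FF: "F \<in> map_faces D \<alpha> \<sigma>" "y \<in> F" for F y
  proof -
    obtain d where "d \<in> D" "F = orbit \<phi> d" using fobt[OF FF(1)] by (elim exE conjE)
    then show ?thesis using FF(2) orbit.step by simp
  qed
  have bwd: "y \<in> F" if FF: "F \<in> map_faces D \<alpha> \<sigma>" "\<phi> y \<in> F" for F y
  proof -
    obtain d where "d \<in> D" "F = orbit \<phi> d" using fobt[OF FF(1)] by (elim exE conjE)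
    then show ?thesis using FF(2) orbit_back[OF permP] by simp
  qed
  have Zs: "\<sigma> e \<in> M" if F: "F \<in> map_faces D \<alpha> \<sigma>" "F \<inter> M = {}" "e \<in> F" for F e
  proof (rule ccontr)
    assume nm: "\<sigma> e \<notin> M"
    have eD: "e \<in> D" using fD F by blast
    have "e \<notin> M" using F by blast
    then have ssM: "\<sigma> (\<sigma> e) \<in> M" using one[OF eD] nm by blast
    have "\<phi> (\<alpha> (\<sigma> (\<sigma> e))) = e" using ainv[OF sD[OF sD[OF eD]]] V[OF eD] by (simp add: \<phi>_def)
    then have "\<alpha> (\<sigma> (\<sigma> e)) \<in> F" using bwd[OF F(1)] F(3) by metis
    moreover have "\<alpha> (\<sigma> (\<sigma> e)) \<in> M" using Ma ssM by blast
    ultimately show False using F(2) by blast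
  qed
  have touch: "orbit \<sigma> x \<inter> F \<noteq> {}" if F: "F \<in> map_faces D \<alpha> \<sigma>" "F \<inter> M = {}" and x: "x \<in> D" for F x
  proof -
    obtain e0 where e0: "e0 \<in> D" "F = orbit \<phi> e0" using F(1) faces by blast
    have e0F: "e0 \<in> F" using e0 permutation_self_in_orbit[OF permP] by simp
    have "(e0, x) \<in> ({(x, \<alpha> x) | x. x \<in> D - M} \<union> {(x, \<sigma> x) | x. x \<in> D})\<^sup>*" using conn[OF e0(1) x] .
    then have "x \<in> D \<and> orbit \<sigma> x \<inter> F \<noteq> {}"
    proof (induction rule: rtrancl_induct)
      case base then show ?case using e0 e0F permutation_self_in_orbit[OF permS] by blast
    next
      case (step y z)
      from step.hyps(2) consider (a) "y \<in> D - M" "z = \<alpha> y" | (s) "y \<in> D" "z = \<sigma> y" by blast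
      then show ?case
      proof cases
        case s then show ?thesis using step.IH permutation_orbit_step[OF permS] sD by auto
      next
        case a
        then have yD: "y \<in> D" and yM: "y \<notin> M" by auto
        from step.IH obtain e where e: "e \<in> orbit \<sigma> y" "e \<in> F" by blast
        have eM: "\<sigma> e \<in> M" using Zs[OF F e(2)] .
        have "e = y \<or> e = \<sigma> y \<or> e = \<sigma> (\<sigma> y)" using e(1) V[OF yD] by blast
        then have "\<alpha> y \<in> D \<and> orbit \<sigma> (\<alpha> y) \<inter> F \<noteq> {}"
        proof (elim disjE)
          assume "e = y"
          then have "\<sigma> (\<alpha> y) \<in> F" using fwd[OF F(1) e(2)] by (simp add: \<phi>_def)
          moreover have "\<sigma> (\<alpha> y) \<in> orbit \<sigma> (\<alpha> y)" by (rule orbit.base)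
          ultimately show ?thesis using aD yD by blast
        next
          assume "e = \<sigma> y"
          have "\<phi> (\<alpha> y) = \<sigma> y" using ainv[OF yD] by (simp add: \<phi>_def)
          then have "\<alpha> y \<in> F" using bwd[OF F(1)] e(2) \<open>e = \<sigma> y\<close> by metis
          then show ?thesis using aD yD permutation_self_in_orbit[OF permS] by blast
        next
          assume "e = \<sigma> (\<sigma> y)"
          then have "y \<in> M" using eM V[OF yD] by simp
          with yM show ?thesis by blast
        qed
        with a show ?thesis by simp
      qed
    qed
    then show ?thesis by blast
  qed
  have Zuniq: "F0 = F1" if H: "F0 \<in> map_faces D \<alpha> \<sigma>" "F0 \<inter> M = {}" "F1 \<in> map_faces D \<alpha> \<sigma>" "F1 \<inter> M = {}" for F0 F1
  proof -
    obtain e0 where e0: "e0 \<in> D" "F0 = orbit \<phi> e0" using H(1) faces by blast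
    have e0F: "e0 \<in> F0" using e0 permutation_self_in_orbit[OF permP] by simp
    obtain z where z: "z \<in> orbit \<sigma> e0" "z \<in> F1" using touch[OF H(3,4) e0(1)] by blast
    have "z = e0 \<or> z = \<sigma> e0 \<or> z = \<sigma> (\<sigma> e0)" using z(1) V[OF e0(1)] by blast
    then show ?thesis
    proof (elim disjE)
      assume "z = e0"
      obtain e1 where e1: "F1 = orbit \<phi> e1" using H(3) faces by blast
      have "orbit \<phi> e0 = orbit \<phi> e1" using orbit_same[OF permP] z(2) \<open>z = e0\<close> e1 by metis
      then show ?thesis using e0 e1 by simp
    next
      assume "z = \<sigma> e0" then show ?thesis using Zs[OF H(1,2) e0F] z(2) H(4) by blast
    next
      assume "z = \<sigma> (\<sigma> e0)"
      then have "\<sigma> (\<sigma> (\<sigma> e0)) \<in> M" using Zs[OF H(3,4) z(2)] by simp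
      then have "e0 \<in> M" using V[OF e0(1)] by simp
      then show ?thesis using e0F H(2) by blast
    qed
  qed
  define Sm where "Sm = {d \<in> D. \<sigma> d \<in> M}"
  have mimg: "{map_edge \<alpha> d | d. d \<in> F \<inter> M} = map_edge \<alpha> ` (F \<inter> M)" for F by blast
  have mle: "face_m \<alpha> M F \<le> card (F \<inter> M)" if "F \<in> map_faces D \<alpha> \<sigma>" for F
    unfolding face_m_def mimg using ffin[OF that] by (simp add: card_image_le)
  have m0: "F \<inter> M = {}" if "F \<in> map_faces D \<alpha> \<sigma>" "face_m \<alpha> M F = 0" for F
    using that(2) ffin[OF that(1)] unfolding face_m_def mimg by simp
  have lle: "face_l \<alpha> \<sigma> M F \<le> card (F \<inter> Sm)" if F: "F \<in> map_faces D \<alpha> \<sigma>" for F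
  proof -
    have sub: "{orbit \<sigma> d | d. d \<in> F \<and> (\<forall>x \<in> orbit \<sigma> d \<inter> M. map_edge \<alpha> x \<inter> F = {})} \<subseteq> (\<lambda>d. orbit \<sigma> d) ` (F \<inter> Sm)"
    proof
      fix v assume "v \<in> {orbit \<sigma> d | d. d \<in> F \<and> (\<forall>x \<in> orbit \<sigma> d \<inter> M. map_edge \<alpha> x \<inter> F = {})}"
      then obtain d where d: "v = orbit \<sigma> d" "d \<in> F" "\<forall>x \<in> orbit \<sigma> d \<inter> M. map_edge \<alpha> x \<inter> F = {}" by blast
      have dD: "d \<in> D" using fD[OF F] d(2) by blast
      have "\<sigma> d \<in> M"
      proof (rule ccontr)
        assume "\<sigma> d \<notin> M"
        have "d \<notin> M" using d(2,3) permutation_self_in_orbit[OF permS, of d] by (auto simp: map_edge_def)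
        then have x: "\<sigma> (\<sigma> d) \<in> M" using one[OF dD] \<open>\<sigma> d \<notin> M\<close> by blast
        have "\<phi> (\<alpha> (\<sigma> (\<sigma> d))) = d" using ainv[OF sD[OF sD[OF dD]]] V[OF dD] by (simp add: \<phi>_def)
        then have "\<alpha> (\<sigma> (\<sigma> d)) \<in> F" using bwd[OF F] d(2) by metis
        moreover have "\<sigma> (\<sigma> d) \<in> orbit \<sigma> d \<inter> M" using x V[OF dD] by simp
        ultimately show False using d(3) by (auto simp: map_edge_def)
      qed
      then show "v \<in> (\<lambda>d. orbit \<sigma> d) ` (F \<inter> Sm)" using d(1,2) dD by (auto simp: Sm_def)
    qed
    have f1: "finite (F \<inter> Sm)" using ffin[OF F] by simp
    then have "finite ((\<lambda>d. orbit \<sigma> d) ` (F \<inter> Sm))" by simp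
    then have "card {orbit \<sigma> d | d. d \<in> F \<and> (\<forall>x \<in> orbit \<sigma> d \<inter> M. map_edge \<alpha> x \<inter> F = {})} \<le> card (F \<inter> Sm)"
      using card_mono[OF _ sub] card_image_le[OF f1] le_trans by blast
    then show ?thesis unfolding face_l_def morbit_orbit[OF permS] .
  qed
  have SmD: "Sm \<subseteq> D" unfolding Sm_def by blast
  have cardSm: "card Sm = card M"
  proof -
    have "\<sigma> ` Sm = M"
    proof
      show "\<sigma> ` Sm \<subseteq> M" unfolding Sm_def by blast
      show "M \<subseteq> \<sigma> ` Sm"
      proof
        fix x assume x: "x \<in> M"
        then have "x \<in> \<sigma> ` D" using MD permutes_image[OF ps] by blast
        then obtain y where "y \<in> D" "x = \<sigma> y" by blast
        then show "x \<in> \<sigma> ` Sm" using x unfolding Sm_def by blast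
      qed
    qed
    moreover have "inj_on \<sigma> Sm" using permutes_inj[OF ps] inj_on_subset by blast
    ultimately show ?thesis using card_image by metis
  qed
  have sumw: "(\<Sum>F\<in>map_faces D \<alpha> \<sigma>. card (F \<inter> M) + card (F \<inter> Sm)) = 2 * card M"
    unfolding sum.distrib faces using partition_sum[OF pp fin MD] partition_sum[OF pp fin SmD] cardSm by simp
  have big: "4 \<le> card (F \<inter> M) + card (F \<inter> Sm)" if "F \<in> map_faces D \<alpha> \<sigma>" "F \<inter> M \<noteq> {}" for F
  proof -
    have "face_m \<alpha> M F \<noteq> 0" using m0 that by blast
    moreover have "(face_m \<alpha> M F, face_l \<alpha> \<sigma> M F) \<notin> {(1,0), (1,1), (1,2), (2,0), (2,1), (3,0)}"
      using nog that(1) by blast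
    ultimately have "4 \<le> face_m \<alpha> M F + face_l \<alpha> \<sigma> M F" by (rule arith6)
    then show ?thesis using mle[OF that(1)] lle[OF that(1)] by linarith
  qed
  define Y where "Y = {F \<in> map_faces D \<alpha> \<sigma>. F \<inter> M \<noteq> {}}"
  define Z where "Z = {F \<in> map_faces D \<alpha> \<sigma>. F \<inter> M = {}}"
  have finZ: "finite Z" unfolding Z_def using ffinite by simp
  have "\<forall>a1 \<in> Z. \<forall>a2 \<in> Z. a1 = a2"
  proof (intro ballI)
    fix a1 a2 assume "a1 \<in> Z" "a2 \<in> Z"
    then have "a1 \<in> map_faces D \<alpha> \<sigma>" "a1 \<inter> M = {}" "a2 \<in> map_faces D \<alpha> \<sigma>" "a2 \<inter> M = {}"
      unfolding Z_def by simp_all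
    then show "a1 = a2" by (rule Zuniq)
  qed
  then have cZ: "card Z \<le> 1" using card_le_Suc0_iff_eq[OF finZ] by simp
  have un: "map_faces D \<alpha> \<sigma> = Y \<union> Z" unfolding Y_def Z_def by blast
  have "card (map_faces D \<alpha> \<sigma>) \<le> card Y + card Z" unfolding un by (rule card_Un_le)
  then have cF: "card (map_faces D \<alpha> \<sigma>) \<le> card Y + 1" using cZ by linarith
  have "4 * card Y = (\<Sum>F\<in>Y. 4)" by simp
  also have "\<dots> \<le> (\<Sum>F\<in>Y. card (F \<inter> M) + card (F \<inter> Sm))"
    by (rule sum_mono) (use big in \<open>auto simp: Y_def\<close>)
  also have "\<dots> \<le> (\<Sum>F\<in>map_faces D \<alpha> \<sigma>. card (F \<inter> M) + card (F \<inter> Sm))"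
    by (rule sum_mono2[OF ffinite]) (auto simp: Y_def)
  finally have low: "4 * card Y \<le> 2 * card M" using sumw by simp
  have verts0: "map_vertices D \<sigma> = {orbit \<sigma> d | d. d \<in> D}"
    unfolding map_vertices_def morbit_orbit[OF permS] ..
  have verts: "map_vertices D \<sigma> = orbit \<sigma> ` D" unfolding verts0 by blast
  have "(\<Sum>B\<in>map_vertices D \<sigma>. card (B \<inter> D)) = card D"
    unfolding verts by (rule partition_sum[OF ps fin order_refl])
  moreover have "(\<Sum>B\<in>map_vertices D \<sigma>. card (B \<inter> D)) = (\<Sum>B\<in>map_vertices D \<sigma>. 3)"
  proof (rule sum.cong)
    fix B assume "B \<in> map_vertices D \<sigma>"
    then obtain d where d: "d \<in> D" "B = orbit \<sigma> d" unfolding verts by blast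
    have c3: "card (orbit \<sigma> d) = 3" using assms(2) d(1) morbit_orbit[OF permS] by (simp add: trivalent_def)
    have "B \<subseteq> D" using permutes_orbit_subset[OF ps d(1)] d(2) by simp
    then have "B \<inter> D = B" by (rule Int_absorb2)
    then show "card (B \<inter> D) = 3" using c3 d(2) by simp
  qed simp
  ultimately have cV: "3 * card (map_vertices D \<sigma>) = card D" by simp
  have "(\<Sum>B\<in>map_vertices D \<sigma>. card (B \<inter> M)) = card M"
    unfolding verts by (rule partition_sum[OF ps fin MD])
  moreover have "(\<Sum>B\<in>map_vertices D \<sigma>. card (B \<inter> M)) = (\<Sum>B\<in>map_vertices D \<sigma>. 1)"
  proof (rule sum.cong)
    fix B assume "B \<in> map_vertices D \<sigma>"
    then obtain d where d: "d \<in> D" "B = orbit \<sigma> d" unfolding verts by blast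
    then show "card (B \<inter> M) = 1" using Mone[OF d(1)] morbit_orbit[OF permS] by simp
  qed simp
  ultimately have cVM: "card (map_vertices D \<sigma>) = card M" by simp
  have edges1: "map_edges D \<alpha> = (\<lambda>d. {d, \<alpha> d}) ` D"
    unfolding map_edges_def map_edge_def by (rule Setcompr_eq_image)
  have eo: "orbit \<alpha> d = {d, \<alpha> d}" if "d \<in> D" for d
    using ainv[OF that] by (intro edge_orbit) (elim conjE)
  have "(\<lambda>d. {d, \<alpha> d}) ` D = orbit \<alpha> ` D"
  proof (rule image_cong[OF refl])
    fix d assume "d \<in> D" then show "{d, \<alpha> d} = orbit \<alpha> d" using eo by simp
  qed
  then have edges: "map_edges D \<alpha> = orbit \<alpha> ` D" using edges1 by simp
  have "(\<Sum>B\<in>map_edges D \<alpha>. card (B \<inter> D)) = card D"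
    unfolding edges by (rule partition_sum[OF pa fin order_refl])
  moreover have "(\<Sum>B\<in>map_edges D \<alpha>. card (B \<inter> D)) = (\<Sum>B\<in>map_edges D \<alpha>. 2)"
  proof (rule sum.cong)
    fix B assume "B \<in> map_edges D \<alpha>"
    then obtain d where d: "d \<in> D" "B = {d, \<alpha> d}" unfolding edges1 by (rule imageE)
    have "\<alpha> d \<in> D" using aD d(1) .
    then have "B \<inter> D = {d, \<alpha> d}" using d by auto
    moreover have "\<alpha> d \<noteq> d" using ainv[OF d(1)] by (elim conjE)
    ultimately show "card (B \<inter> D) = 2" by simp
  qed simp
  ultimately have cE: "2 * card (map_edges D \<alpha>) = card D" by simp
  from euler cV cVM cE cF low show False by linarith
qed

end
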